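(* For $\zeta^0,\zeta^1\in\mathbb C$ and $n\in\mathbb Z$, \[ \sum_{k=0}^{N-1}(\zeta^0)_k^{-1}\,\omega^{k(\zeta^1-n)}=\omega^n\,\omega^{(N-1)(\zeta^0+\zeta^1)}\sum_{k=0}^{N-1}(-\zeta^1+n)_k^{-1}\,\omega^{-k\zeta^0}. \]
   Context: $N\ge2$, $\omega=e^{2\pi i/N}$, $\omega^x=e^{2\pi ix/N}$. For $\zeta\in\mathbb C$ and $k\ge0$, $(\zeta)_k^{-1}=(1-\omega^{\zeta+1})(1-\omega^{\zeta+2})\cdots(1-\omega^{\zeta+k})$. *)

theory Defs
  imports Complex_Main
begin

definition omega_pow :: "nat \<Rightarrow> complex \<Rightarrow> complex" where
  "omega_pow N x = exp (2 * of_real pi * \<i> * x / of_nat N)"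

text \<open>The symbol (zeta)_k^{-1} of the paper: the finite product
  (1 - omega^(zeta+1)) ... (1 - omega^(zeta+k)); empty product 1 for k = 0.\<close>
definition qpoch_inv :: "nat \<Rightarrow> complex \<Rightarrow> nat \<Rightarrow> complex" where
  "qpoch_inv N z k = (\<Prod>j=1..k. 1 - omega_pow N (z + of_nat j))"

end

theory Submission imports Defs "HOL-Computational_Algebra.Polynomial" begin

definition Pq :: "complex \<Rightarrow> complex \<Rightarrow> nat \<Rightarrow> complex" where
  "Pq w u k = (\<Prod>j=1..k. 1 - u * w^j)"

definition GG :: "complex \<Rightarrow> nat \<Rightarrow> complex \<Rightarrow> complex \<Rightarrow> complex" where
  "GG w N u v = (\<Sum>k<N. Pq w u k * v^(N-1-k))"

lemma Pq_0[simp]: "Pq w u 0 = 1" by (simp add: Pq_def)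

lemma Pq_Suc: "Pq w u (Suc k) = Pq w u k * (1 - u * w^(Suc k))"
  unfolding Pq_def by (simp add: prod.nat_ivl_Suc' mult.commute)

lemma Pq_shift: "Pq w (u*w) k * (1 - u*w) = Pq w u (Suc k)"
proof (induction k)
  case 0 then show ?case by (simp add: Pq_Suc)
next
  case (Suc k)
  have "Pq w (u*w) (Suc k) * (1 - u*w) = (Pq w (u*w) k * (1 - u*w)) * (1 - u * w^(Suc (Suc k)))"
    by (simp add: Pq_Suc algebra_simps)
  also have "\<dots> = Pq w u (Suc (Suc k))" using Suc by (simp add: Pq_Suc)
  finally show ?case .
qed

lemma sumshift:
  assumes "N > 0"
  shows "(\<Sum>k<N. Pq w u (Suc k) * x^(N-1-k)) = x * GG w N u x - x^N + Pq w u N"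
proof -
  define f where "f k = Pq w u k * x^(N-k)" for k
  have "(\<Sum>k<Suc N. f k) = f 0 + (\<Sum>k<N. f (Suc k))" by (rule sum.lessThan_Suc_shift)
  moreover have "(\<Sum>k<Suc N. f k) = (\<Sum>k<N. f k) + f N" by simp
  moreover have "(\<Sum>k<N. f k) = x * GG w N u x"
    unfolding GG_def sum_distrib_left f_def
    by (intro sum.cong refl) (simp add: Suc_diff_Suc[symmetric] algebra_simps flip: power_Suc)
  moreover have "(\<Sum>k<N. f (Suc k)) = (\<Sum>k<N. Pq w u (Suc k) * x^(N-1-k))"
    unfolding f_def by (intro sum.cong refl) simp
  ultimately have "x * GG w N u x + Pq w u N = x ^ N + (\<Sum>k<N. Pq w u (Suc k) * x^(N-1-k))" by (simp add: f_def)
  then show ?thesis by (simp add: algebra_simps eq_diff_eq diff_eq_eq)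
qed

lemma EqA:
  assumes N: "N > 0" and PN: "\<And>x. Pq w x N = 1 - x^N"
  shows "(1 - u*w) * GG w N (u*w) v = v * GG w N u v - v^N + 1 - u^N"
proof -
  have "(1 - u*w) * GG w N (u*w) v = (\<Sum>k<N. Pq w u (Suc k) * v^(N-1-k))"
    unfolding GG_def sum_distrib_left
    by (intro sum.cong refl) (simp flip: Pq_shift add: algebra_simps)
  also have "\<dots> = v * GG w N u v - v^N + 1 - u^N" using sumshift[OF N] PN by simp
  finally show ?thesis .
qed

lemma EqB:
  assumes N: "N > 0" and PN: "\<And>x. Pq w x N = 1 - x^N" and wN: "w^N = 1"
  shows "(1 - v*w) * GG w N u (v*w) = u * GG w N u v - v^N + 1 - u^N"
proof -
  have "u * GG w N u v = (\<Sum>k<N. (Pq w u k - Pq w u (Suc k)) * (v*w)^(N-1-k))"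
    unfolding GG_def sum_distrib_left
  proof (intro sum.cong refl)
    fix k assume k: "k \<in> {..<N}"
    have "w^(Suc k) * w^(N-1-k) = w^(Suc k + (N-1-k))" by (rule power_add[symmetric])
    also have "Suc k + (N-1-k) = N" using k by simp
    finally have "w^(Suc k) * w^(N-1-k) = 1" using wN by simp
    then show "u * (Pq w u k * v ^ (N - 1 - k)) = (Pq w u k - Pq w u (Suc k)) * (v * w) ^ (N - 1 - k)"
      by (simp add: Pq_Suc power_mult_distrib algebra_simps)
  qed
  also have "\<dots> = GG w N u (v*w) - (\<Sum>k<N. Pq w u (Suc k) * (v*w)^(N-1-k))"
    unfolding GG_def by (simp add: sum_subtractf left_diff_distrib)
  also have "\<dots> = GG w N u (v*w) - ((v*w) * GG w N u (v*w) - (v*w)^N + 1 - u^N)"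
    using sumshift[OF N] PN by simp
  also have "(v*w)^N = v^N" using wN by (simp add: power_mult_distrib)
  finally show ?thesis by (simp add: algebra_simps)
qed

lemma Diter:
  assumes N: "N > 0" and PN: "\<And>x. Pq w x N = 1 - x^N" and wN: "w^N = 1"
  defines "D \<equiv> \<lambda>u v. GG w N u v - GG w N v u"
  shows "D u (v * w^m) * Pq w v m = u^m * D u v"
proof (induction m)
  case 0 then show ?case by simp
next
  case (Suc m)
  have step: "(1 - x*w) * D u (x*w) = u * D u x" for x
  proof -
    have e1: "(1 - x*w) * GG w N u (x*w) = u * GG w N u x - x^N + 1 - u^N"
      by (rule EqB[OF N PN wN])
    have e2: "(1 - x*w) * GG w N (x*w) u = u * GG w N x u - u^N + 1 - x^N"
      by (rule EqA[OF N PN])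
    show ?thesis unfolding D_def right_diff_distrib e1 e2 by (simp add: algebra_simps)
  qed
  have "D u (v * w^Suc m) * Pq w v (Suc m) = ((1 - (v*w^m)*w) * D u ((v*w^m)*w)) * Pq w v m"
    by (simp add: Pq_Suc algebra_simps)
  also have "\<dots> = u * (D u (v * w^m) * Pq w v m)" by (simp only: step) simp
  also have "\<dots> = u^Suc m * D u v" using Suc by simp
  finally show ?case .
qed

lemma GG_sym:
  assumes N: "N > 0" and PN: "\<And>x. Pq w x N = 1 - x^N" and wN: "w^N = 1"
  shows "GG w N u v = GG w N v u"
proof -
  define D where "D = (\<lambda>u v. GG w N u v - GG w N v u)"
  have zero: "D u x = 0" if "x^N \<noteq> 1 - u^N" for x
  proof -
    have "D u (x * w^N) * Pq w x N = u^N * D u x"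
      unfolding D_def by (rule Diter[OF N PN wN])
    then have "D u x * (1 - x^N - u^N) = 0" using wN PN by (simp add: algebra_simps)
    moreover have "1 - x^N - u^N \<noteq> 0" using that by (auto simp: algebra_simps)
    ultimately show ?thesis by simp
  qed
  define p where "p = (\<Sum>k<N. smult (Pq w u k) (monom 1 (N-1-k)))
      - (\<Sum>k<N. smult (u^(N-1-k)) (\<Prod>j=1..k. [:1, -(w^j):]))"
  have pev: "poly p x = D u x" for x
    unfolding p_def D_def GG_def Pq_def
    by (simp add: poly_sum poly_prod poly_monom algebra_simps)
  have "p = 0"
  proof (rule ccontr)
    assume "p \<noteq> 0"
    then have "finite {x. poly p x = 0}" by (rule poly_roots_finite)
    moreover have "finite {x::complex. x^N = 1 - u^N}" using N by (rule finite_nth_roots)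
    ultimately have "finite ({x. poly p x = 0} \<union> {x::complex. x^N = 1 - u^N})" by simp
    moreover have "{x. poly p x = 0} \<union> {x::complex. x^N = 1 - u^N} = UNIV"
      using zero pev by auto
    ultimately show False using infinite_UNIV_char_0[where ?'a=complex] by auto
  qed
  then have "D u v = 0" using pev[of v] by simp
  then show ?thesis by (simp add: D_def)
qed

lemma wpow_cis:
  "exp (2 * of_real pi * \<i> / of_nat N) ^ k = cis (2 * pi * real k / real N)"
proof -
  have "exp (2 * of_real pi * \<i> / of_nat N) ^ k = exp (of_nat k * (2 * of_real pi * \<i> / of_nat N))"
    by (rule exp_of_nat_mult[symmetric])
  also have "\<dots> = cis (2 * pi * real k / real N)"
    unfolding cis_conv_exp by (simp add: field_simps)
  finally show ?thesis .
qed

lemma wpow_N: "N > 0 \<Longrightarrow> exp (2 * of_real pi * \<i> / of_nat N) ^ N = 1"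
  unfolding wpow_cis by simp

lemma PN_lemma:
  assumes N: "N > 0"
  defines "w \<equiv> exp (2 * of_real pi * \<i> / of_nat N)"
  shows "Pq w x N = 1 - x^N"
proof -
  define p where "p = (\<Prod>j=1..N. [:1, -(w^j):])"
  define q where "q = [:1:] - (monom 1 N :: complex poly)"
  define A where "A = insert 0 {z::complex. z^N = 1}"
  have "p = q"
  proof (rule poly_eqI_degree[where A = A])
    fix z assume "z \<in> A"
    then consider "z = 0" | "z^N = 1" unfolding A_def by auto
    then show "poly p z = poly q z"
    proof cases
      case 1 then show ?thesis using N by (simp add: p_def q_def poly_prod poly_monom)
    next
      case 2
      then have "z \<in> (\<lambda>k. cis (2 * pi * real k / real N)) ` {..<N}"
        using bij_betw_roots_unity[OF N] unfolding bij_betw_def by auto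
      then obtain k where k: "k < N" and z: "z = w^k" unfolding w_def wpow_cis by auto
      have "z * w^(N-k) = w^(k + (N-k))" by (simp add: z power_add)
      also have "\<dots> = 1" using k wpow_N[OF N] by (simp add: w_def)
      finally have "1 - z * w^(N-k) = 0" by simp
      moreover have "N - k \<in> {1..N}" using k by auto
      ultimately have "poly p z = 0" unfolding p_def poly_prod
        by (intro prod_zero) (auto simp: algebra_simps intro!: bexI[of _ "N-k"])
      moreover have "poly q z = 0" using 2 by (simp add: q_def poly_monom)
      ultimately show ?thesis by simp
    qed
  next
    have fin: "finite {z::complex. z^N = 1}" using N by (rule finite_nth_roots)
    have "card A = Suc N" unfolding A_def using card_roots_unity_eq[OF N] fin N
      by (subst card_insert_disjoint) (auto simp: power_0_left)
    moreover have "degree p \<le> N"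
    proof -
      have "degree p \<le> sum (degree \<circ> (\<lambda>j. [:1, -(w^j):])) {1..N}"
        unfolding p_def by (rule degree_prod_sum_le) simp
      also have "\<dots> \<le> sum (\<lambda>j. 1) {1..N}" by (intro sum_mono) simp
      finally show ?thesis by simp
    qed
    moreover have "degree q \<le> N" unfolding q_def
      by (rule order.trans[OF degree_diff_le_max]) (simp add: degree_monom_le)
    ultimately show "degree p < card A" "degree q < card A" by auto
  qed
  then have "poly p x = poly q x" by simp
  then show ?thesis by (simp add: p_def q_def Pq_def poly_prod poly_monom algebra_simps)
qed

lemma conv_sum:
  assumes "x \<noteq> 0"
  shows "(\<Sum>k<N. Pq w a k * (1/x)^k) = GG w N a x / x^(N-1)"
  unfolding GG_def sum_divide_distrib
proof (intro sum.cong refl)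
  fix k assume "k \<in> {..<N}"
  then have "x^(N-1-k) = x^(N-1) / x^k" using assms by (simp add: power_diff)
  then show "Pq w a k * (1 / x) ^ k = Pq w a k * x ^ (N - 1 - k) / x ^ (N - 1)"
    using assms by (simp add: field_simps)
qed

lemma core:
  assumes N: "N > 0" and u: "u \<noteq> 0" and v: "v \<noteq> 0"
  defines "w \<equiv> exp (2 * of_real pi * \<i> / of_nat N)"
  shows "(\<Sum>k<N. Pq w u k * (1/v)^k) = (u/v)^(N-1) * (\<Sum>k<N. Pq w v k * (1/u)^k)"
proof -
  have PN: "\<And>x. Pq w x N = 1 - x^N" unfolding w_def by (rule PN_lemma[OF N])
  have wN: "w^N = 1" unfolding w_def by (rule wpow_N[OF N])
  have e1: "(\<Sum>k<N. Pq w u k * (1/v)^k) = GG w N u v / v^(N-1)" by (rule conv_sum[OF v])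
  have e2: "(\<Sum>k<N. Pq w v k * (1/u)^k) = GG w N v u / u^(N-1)" by (rule conv_sum[OF u])
  show ?thesis unfolding e1 e2 using GG_sym[OF N PN wN, of u v] u v
    by (simp add: power_divide)
qed

lemma op_add: "omega_pow N (a + b) = omega_pow N a * omega_pow N b"
  unfolding omega_pow_def by (simp add: exp_add[symmetric] add_divide_distrib distrib_left)

lemma op_nat_mult: "omega_pow N (of_nat k * a) = omega_pow N a ^ k"
  unfolding omega_pow_def by (simp add: exp_of_nat_mult[symmetric] mult_ac)

lemma op_neg: "omega_pow N (- a) = 1 / omega_pow N a"
  unfolding omega_pow_def by (simp add: exp_minus field_simps)

lemma op_nz: "omega_pow N a \<noteq> 0"
  unfolding omega_pow_def by simp

lemma op_nat: "omega_pow N (of_nat j) = exp (2 * of_real pi * \<i> / of_nat N) ^ j"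
  using op_nat_mult[of N j 1] unfolding omega_pow_def by simp

lemma op_int_N: "N > 0 \<Longrightarrow> omega_pow N (of_int n) ^ N = 1"
proof -
  assume N: "N > 0"
  have "omega_pow N (of_int n) ^ N = exp (of_nat N * (2 * of_real pi * \<i> * of_int n / of_nat N))"
    unfolding omega_pow_def by (rule exp_of_nat_mult[symmetric])
  also have "\<dots> = cis (2 * pi * real_of_int n)"
    unfolding cis_conv_exp using N by (simp add: field_simps)
  also have "\<dots> = 1" by simp
  finally show ?thesis .
qed

lemma qpoch_Pq: "qpoch_inv N z k = Pq (exp (2 * of_real pi * \<i> / of_nat N)) (omega_pow N z) k"
  unfolding qpoch_inv_def Pq_def by (simp add: op_add op_nat)

theorem lemmaA8:
  fixes N :: nat and z0 z1 :: complex and n :: int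
  assumes "N \<ge> 2"
  shows "(\<Sum>k=0..N-1. qpoch_inv N z0 k * omega_pow N (of_nat k * (z1 - of_int n)))
       = omega_pow N (of_int n) * omega_pow N ((of_nat N - 1) * (z0 + z1))
         * (\<Sum>k=0..N-1. qpoch_inv N (- z1 + of_int n) k * omega_pow N (- (of_nat k * z0)))"
proof -
  have N: "N > 0" using assms by simp
  define w where "w = exp (2 * of_real pi * \<i> / of_nat N)"
  define u where "u = omega_pow N z0"
  define v where "v = omega_pow N (- z1 + of_int n)"
  define c where "c = omega_pow N (of_int n)"
  have u0: "u \<noteq> 0" and v0: "v \<noteq> 0" and c0: "c \<noteq> 0" by (simp_all add: u_def v_def c_def op_nz)
  have cN: "c^N = 1" unfolding c_def by (rule op_int_N[OF N])
  have rng: "{0..N-1} = {..<N}" using N by auto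
  have L: "(\<Sum>k=0..N-1. qpoch_inv N z0 k * omega_pow N (of_nat k * (z1 - of_int n)))
      = (\<Sum>k<N. Pq w u k * (1/v)^k)"
    unfolding rng
  proof (intro sum.cong refl)
    fix k
    have e: "z1 - of_int n = - (- z1 + of_int n)" by simp
    show "qpoch_inv N z0 k * omega_pow N (of_nat k * (z1 - of_int n)) = Pq w u k * (1 / v) ^ k"
      unfolding e by (simp only: qpoch_Pq op_nat_mult op_neg u_def v_def w_def)
  qed
  have R: "(\<Sum>k=0..N-1. qpoch_inv N (- z1 + of_int n) k * omega_pow N (- (of_nat k * z0)))
      = (\<Sum>k<N. Pq w v k * (1/u)^k)"
    unfolding rng
    by (intro sum.cong refl) (simp only: qpoch_Pq op_nat_mult op_neg u_def v_def w_def power_one_over)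
  have z1: "z1 = of_int n - (- z1 + of_int n)" by simp
  have z1': "z1 = of_int n + - (- z1 + of_int n)" by simp
  have "omega_pow N z1 * v = omega_pow N (z1 + (- z1 + of_int n))" by (simp only: v_def op_add)
  also have "\<dots> = c" unfolding c_def by simp
  finally have oz1: "omega_pow N z1 = c / v" using v0 by (simp add: field_simps)
  have "of_nat N - 1 = (of_nat (N-1) :: complex)" using N by (simp add: of_nat_diff)
  then have M: "omega_pow N ((of_nat N - 1) * (z0 + z1)) = (u * (c / v))^(N-1)"
    by (simp only: op_nat_mult op_add oz1 u_def)
  have cc: "c * c^(N-1) = 1" using cN N by (cases N) auto
  have "c * (u * (c / v))^(N-1) = (c * c^(N-1)) * (u/v)^(N-1)"
    by (simp add: power_mult_distrib power_divide)
  then have cu: "c * (u * (c / v))^(N-1) = (u/v)^(N-1)" by (simp only: cc mult_1_left)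
  show ?thesis unfolding L R M c_def[symmetric] cu
    unfolding w_def by (rule core[OF N u0 v0])
qed

end
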